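(* Let $n\ge2$ and let $\phi_1(x),\dots,\phi_n(x)$ be (nonvanishing) functions of $x$. Let $J$ be the $(n+1)\times(n+1)$ matrix, indices $0,\dots,n$, with only nonzero entries $J_{k,n-k}=(-1)^k$. Put $f_0(x)=\big(\prod_{i=1}^n\phi_i(x)\big)^{-1/2}$ and $$F(x)=f_0(x)\big(1,\mathcal I(1),\mathcal I(1,2),\dots,\mathcal I(1,2,\dots,n)\big).$$ Let $s$ be the substitution $\phi_a\mapsto\phi_{n+1-a}$ ($1\le a\le n$), applied to any expression built from the $\phi_a$, their derivatives and iterated integrals of them (so $s\,\mathcal I(a_1\cdots a_m)=\mathcal I(n+1-a_1,\dots,n+1-a_m)$), componentwise on vectors. Then for integers $i,j\ge0$, $$F^{(i)}J(sF^{(j)})^T=0\ \text{ if } i+j<n,\qquad F^{(i)}J(sF^{(j)})^T=(-1)^i\ \text{ if } i+j=n.$$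
   Context: $F^{(i)}$ denotes the componentwise $i$-th derivative. Iterated integrals: $\mathcal I(a_1\cdots a_k)(x)=\int_0^x\phi_{a_1}(x_1)\,dx_1\int_0^{x_1}\phi_{a_2}(x_2)\,dx_2\cdots\int_0^{x_{k-1}}\phi_{a_k}(x_k)\,dx_k$ with $\mathcal I(\varnothing)=1$. *)

theory Defs
  imports "HOL-Analysis.Analysis"
begin

fun nderiv :: "nat \<Rightarrow> (real \<Rightarrow> complex) \<Rightarrow> real \<Rightarrow> complex" where
  "nderiv 0 f = f"
| "nderiv (Suc k) f = (\<lambda>x. vector_derivative (nderiv k f) (at x))"

definition oint :: "(real \<Rightarrow> complex) \<Rightarrow> real \<Rightarrow> complex" where
  "oint g x = (if 0 \<le> x then integral {0..x} g else - integral {x..0} g)"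

fun iint :: "(nat \<Rightarrow> real \<Rightarrow> complex) \<Rightarrow> nat list \<Rightarrow> real \<Rightarrow> complex" where
  "iint \<phi> [] x = 1"
| "iint \<phi> (a # as) x = oint (\<lambda>t. \<phi> a t * iint \<phi> as t) x"

definition Fvec :: "(nat \<Rightarrow> real \<Rightarrow> complex) \<Rightarrow> (real \<Rightarrow> complex) \<Rightarrow> nat \<Rightarrow> real \<Rightarrow> complex" where
  "Fvec \<phi> f0 k x = f0 x * iint \<phi> [1..<k+1] x"

definition Jmat :: "nat \<Rightarrow> nat \<Rightarrow> nat \<Rightarrow> complex" where
  "Jmat n k m = (if k + m = n then (-1) ^ k else 0)"

definition subst_s :: "nat \<Rightarrow> (nat \<Rightarrow> real \<Rightarrow> complex) \<Rightarrow> nat \<Rightarrow> real \<Rightarrow> complex" where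
  "subst_s n \<phi> a = \<phi> (n + 1 - a)"

definition Jform :: "nat \<Rightarrow> (nat \<Rightarrow> complex) \<Rightarrow> (nat \<Rightarrow> complex) \<Rightarrow> complex" where
  "Jform n u v = (\<Sum>k\<le>n. \<Sum>m\<le>n. u k * Jmat n k m * v m)"

end

theory Submission imports Defs
begin

lemma nderiv_Suc_inner: "nderiv (Suc k) f = nderiv k (nderiv (Suc 0) f)"
  by (induction k) auto

definition smooth :: "(real \<Rightarrow> complex) \<Rightarrow> bool" where
  "smooth f \<longleftrightarrow> (\<forall>k x. (nderiv k f has_vector_derivative nderiv (Suc k) f x) (at x))"

lemma smooth_iff_diff: "smooth f \<longleftrightarrow> (\<forall>k x. nderiv k f differentiable (at x))"
  unfolding smooth_def
  by (metis differentiableI_vector nderiv.simps(2) vector_derivative_works)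

lemma nderiv1_eq:
  assumes "\<And>x. (f has_vector_derivative f' x) (at x)"
  shows "nderiv (Suc 0) f = f'"
  using assms by (auto simp: vector_derivative_at)

lemma nderiv_Suc_eq:
  assumes "\<And>x. (f has_vector_derivative f' x) (at x)"
  shows "nderiv (Suc l) f = nderiv l f'"
  using nderiv_Suc_inner nderiv1_eq[OF assms] by simp

lemma smooth_intro:
  assumes "\<And>x. (f has_vector_derivative f' x) (at x)" "smooth f'"
  shows "smooth f"
  unfolding smooth_def
proof (intro allI)
  fix k x show "(nderiv k f has_vector_derivative nderiv (Suc k) f x) (at x)"
  proof (cases k)
    case 0 then show ?thesis using assms(1) nderiv1_eq[OF assms(1)] by simp
  next
    case (Suc k')
    then show ?thesis using assms(2) nderiv_Suc_eq[OF assms(1)]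
      unfolding smooth_def by (metis)
  qed
qed

lemma smooth_D: "smooth f \<Longrightarrow> (f has_vector_derivative nderiv (Suc 0) f x) (at x)"
  unfolding smooth_def by (metis nderiv.simps(1))

lemma smooth_D1: "smooth f \<Longrightarrow> smooth (nderiv (Suc 0) f)"
  unfolding smooth_def by (metis nderiv_Suc_inner)

lemma nderiv_add_weak:
  assumes "\<And>j x. j < k \<Longrightarrow> nderiv j f differentiable (at x)"
    "\<And>j x. j < k \<Longrightarrow> nderiv j g differentiable (at x)"
  shows "nderiv k (\<lambda>t. f t + g t) = (\<lambda>t. nderiv k f t + nderiv k g t)"
  using assms
proof (induction k)
  case 0 then show ?case by simp
next
  case (Suc k)
  have IH: "nderiv k (\<lambda>t. f t + g t) = (\<lambda>t. nderiv k f t + nderiv k g t)"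
    using Suc by auto
  show ?case
  proof
    fix x
    have "(nderiv k f has_vector_derivative nderiv (Suc k) f x) (at x)"
      using Suc.prems(1)[of k x] by (simp add: vector_derivative_works)
    moreover have "(nderiv k g has_vector_derivative nderiv (Suc k) g x) (at x)"
      using Suc.prems(2)[of k x] by (simp add: vector_derivative_works)
    ultimately have "((\<lambda>t. nderiv k f t + nderiv k g t) has_vector_derivative
        nderiv (Suc k) f x + nderiv (Suc k) g x) (at x)"
      by (rule has_vector_derivative_add)
    then show "nderiv (Suc k) (\<lambda>t. f t + g t) x = nderiv (Suc k) f x + nderiv (Suc k) g x"
      by (simp only: nderiv.simps IH vector_derivative_at)
  qed
qed

lemma nderiv_add:
  "smooth f \<Longrightarrow> smooth g \<Longrightarrow> nderiv k (\<lambda>t. f t + g t) = (\<lambda>t. nderiv k f t + nderiv k g t)"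
  by (rule nderiv_add_weak) (auto simp: smooth_iff_diff)

lemma smooth_add: assumes "smooth f" "smooth g" shows "smooth (\<lambda>t. f t + g t)"
  unfolding smooth_def
proof (intro allI)
  fix k x
  have "((\<lambda>t. nderiv k f t + nderiv k g t) has_vector_derivative nderiv (Suc k) f x + nderiv (Suc k) g x) (at x)"
    using assms unfolding smooth_def by (intro has_vector_derivative_add) auto
  then show "(nderiv k (\<lambda>t. f t + g t) has_vector_derivative nderiv (Suc k) (\<lambda>t. f t + g t) x) (at x)"
    by (simp only: nderiv_add[OF assms])
qed

lemma smooth_mult_aux:
  "\<forall>f g. smooth f \<longrightarrow> smooth g \<longrightarrow> (\<forall>j\<le>k. \<forall>x. nderiv j (\<lambda>t. f t * g t) differentiable (at x))"
proof (induction k)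
  case 0
  then show ?case
    by (auto simp: smooth_iff_diff intro!: differentiable_mult[of _ _ "UNIV", simplified]
        dest: spec[where x=0] ) 
next
  case (Suc k)
  show ?case
  proof (intro allI impI)
    fix f g j x assume f: "smooth f" and g: "smooth g" and j: "j \<le> Suc k"
    show "nderiv j (\<lambda>t. f t * g t) differentiable at x"
    proof (cases "j \<le> k")
      case True then show ?thesis using Suc.IH f g by blast
    next
      case False
      then have jj: "j = Suc k" using j by simp
      let ?f' = "nderiv (Suc 0) f" and ?g' = "nderiv (Suc 0) g"
      have d: "((\<lambda>t. f t * g t) has_vector_derivative ?f' x * g x + f x * ?g' x) (at x)" for x
        using has_vector_derivative_mult[OF smooth_D[OF f] smooth_D[OF g]]
        by (simp add: algebra_simps)
      have f': "smooth ?f'" and g': "smooth ?g'" using smooth_D1 f g by auto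
      have "nderiv j (\<lambda>t. f t * g t) = nderiv k (\<lambda>t. ?f' t * g t + f t * ?g' t)"
        using nderiv_Suc_eq[OF d] jj by simp
      also have "\<dots> = (\<lambda>t. nderiv k (\<lambda>t. ?f' t * g t) t + nderiv k (\<lambda>t. f t * ?g' t) t)"
        by (rule nderiv_add_weak) (use Suc.IH f g f' g' in auto)
      finally show ?thesis
        using Suc.IH f g f' g' by (auto intro!: differentiable_add)
    qed
  qed
qed

lemma smooth_mult: "smooth f \<Longrightarrow> smooth g \<Longrightarrow> smooth (\<lambda>t. f t * g t)"
  unfolding smooth_iff_diff[of "\<lambda>t. f t * g t"] using smooth_mult_aux by blast

lemma nderiv_zero: "nderiv k (\<lambda>_. 0) = (\<lambda>_. 0)"
  by (induction k) auto

lemma smooth_zero: "smooth (\<lambda>_. 0)"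
  by (simp add: smooth_def nderiv_zero)

lemma smooth_const: "smooth (\<lambda>_. c)"
  by (rule smooth_intro[of _ "\<lambda>_. 0"]) (auto intro: smooth_zero)

lemma smooth_cont: "smooth f \<Longrightarrow> continuous_on UNIV f"
  by (metis continuous_at_imp_continuous_on has_vector_derivative_continuous smooth_D)

lemma oint_eq:
  assumes c: "continuous_on UNIV g" and "a \<le> 0" "a \<le> u"
  shows "oint g u = integral {a..u} g - integral {a..0} g"
proof (cases "0 \<le> u")
  case True
  have "integral {a..0} g + integral {0..u} g = integral {a..u} g"
    by (rule Henstock_Kurzweil_Integration.integral_combine) (use assms True in \<open>auto intro: integrable_continuous_real continuous_on_subset[OF c]\<close>)
  then show ?thesis using True by (simp add: oint_def algebra_simps)
next
  case False
  have "integral {a..u} g + integral {u..0} g = integral {a..0} g"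
    by (rule Henstock_Kurzweil_Integration.integral_combine) (use assms False in \<open>auto intro: integrable_continuous_real continuous_on_subset[OF c]\<close>)
  then show ?thesis using False by (simp add: oint_def algebra_simps)
qed

lemma oint_deriv:
  assumes c: "continuous_on UNIV g"
  shows "(oint g has_vector_derivative g x) (at x)"
proof -
  define a where "a = min x 0 - 1"
  define b where "b = max x 0 + 1"
  have "((\<lambda>u. integral {a..u} g) has_vector_derivative g x) (at x within {a..b})"
    by (rule integral_has_vector_derivative) (auto simp: a_def b_def intro: continuous_on_subset[OF c])
  then have "((\<lambda>u. integral {a..u} g - integral {a..0} g) has_vector_derivative g x - 0) (at x within {a..b})"
    by (intro has_vector_derivative_diff) auto
  then have "((\<lambda>u. integral {a..u} g - integral {a..0} g) has_vector_derivative g x) (at x within {a<..<b})"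
    by (auto intro: has_vector_derivative_within_subset)
  then have "((\<lambda>u. integral {a..u} g - integral {a..0} g) has_vector_derivative g x) (at x)"
    by (subst (asm) at_within_open) (auto simp: a_def b_def)
  then show ?thesis
    by (rule has_vector_derivative_transform_within_open[where S="{a<..<b}"])
       (auto simp: a_def b_def intro!: oint_eq[OF c, symmetric])
qed

lemma oint_0: "oint g 0 = 0" by (simp add: oint_def)

fun II :: "(real \<Rightarrow> complex) list \<Rightarrow> real \<Rightarrow> complex" where
  "II [] x = 1"
| "II (g # gs) x = oint (\<lambda>t. g t * II gs t) x"

definition dII :: "(real \<Rightarrow> complex) list \<Rightarrow> real \<Rightarrow> complex" where
  "dII xs x = (case xs of [] \<Rightarrow> 0 | g # gs \<Rightarrow> g x * II gs x)"

lemma dII_simps[simp]: "dII [] x = 0" "dII (g # gs) x = g x * II gs x"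
  by (simp_all add: dII_def)

lemma smooth_II: "(\<forall>g\<in>set gs. smooth g) \<Longrightarrow> smooth (II gs)"
proof (induction gs)
  case Nil
  have "II [] = (\<lambda>_. 1)" by auto
  then show ?case using smooth_const by simp
next
  case (Cons g gs)
  have s: "smooth (\<lambda>t. g t * II gs t)" using Cons by (auto intro!: smooth_mult)
  have e: "II (g # gs) = oint (\<lambda>t. g t * II gs t)" by auto
  show ?case unfolding e
    by (rule smooth_intro[OF oint_deriv[OF smooth_cont[OF s]] s])
qed

lemma II_hasD: "(\<forall>g\<in>set xs. smooth g) \<Longrightarrow> (II xs has_vector_derivative dII xs x) (at x)"
proof (cases xs)
  case Nil
  have "II [] = (\<lambda>_. 1)" by auto
  then show ?thesis using Nil by simp
next
  case (Cons g gs)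
  assume a: "\<forall>g\<in>set xs. smooth g"
  have s: "smooth (\<lambda>t. g t * II gs t)" using a Cons by (auto intro!: smooth_mult smooth_II)
  have e: "II (g # gs) = oint (\<lambda>t. g t * II gs t)" by auto
  show ?thesis using oint_deriv[OF smooth_cont[OF s]] Cons e by simp
qed

lemma II_0: "xs \<noteq> [] \<Longrightarrow> II xs 0 = 0"
  by (cases xs) (auto simp: oint_0)

lemma term_deriv:
  assumes "\<forall>g\<in>set a. smooth g" "\<forall>g\<in>set b. smooth g"
  shows "((\<lambda>x. c * II a x * II b x) has_vector_derivative
          c * (dII a x * II b x + II a x * dII b x)) (at x)"
proof -
  have "((\<lambda>x. c * II a x * II b x) has_vector_derivative
          (c * II a x) * dII b x + (c * dII a x + 0 * II a x) * II b x) (at x)"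
    by (intro has_vector_derivative_mult has_vector_derivative_const II_hasD assms)
  then show ?thesis by (simp add: algebra_simps)
qed

definition Pf :: "(real \<Rightarrow> complex) list \<Rightarrow> real \<Rightarrow> complex" where
  "Pf ps x = (\<Sum>k\<le>length ps. (-1)^k * II (take k ps) x * II (rev (drop k ps)) x)"

lemma Pf_zero:
  "(\<forall>g\<in>set ps. smooth g) \<Longrightarrow> ps \<noteq> [] \<Longrightarrow> Pf ps x = 0"
proof (induction "length ps" arbitrary: ps x rule: less_induct)
  case less
  then obtain p qs where ps: "ps = p # qs" by (cases ps) auto
  show ?case
  proof (cases "qs = []")
    case True
    then show ?thesis using ps by (simp add: Pf_def)
  next
    case False
    define bl where "bl = butlast ps"
    have sm: "\<forall>g\<in>set ps. smooth g" using less by auto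
    have smq: "\<forall>g\<in>set qs. smooth g" using sm ps by auto
    have smb: "\<forall>g\<in>set bl. smooth g" using sm by (auto simp: bl_def dest: in_set_butlastD)
    have bl_ne: "bl \<noteq> []" using False ps by (simp add: bl_def)
    have lb: "length ps = Suc (length bl)" using ps by (simp add: bl_def)
    have Pq: "Pf qs y = 0" for y using less(1)[of qs] ps False smq by auto
    have Pb: "Pf bl y = 0" for y using less(1)[of bl] bl_ne smb lb by auto
    have D: "(Pf ps has_vector_derivative
       (\<Sum>k\<le>length ps. (-1)^k * (dII (take k ps) y * II (rev (drop k ps)) y
          + II (take k ps) y * dII (rev (drop k ps)) y))) (at y)" for y
    proof -
      have e: "Pf ps = (\<lambda>y. \<Sum>k\<le>length ps. (-1)^k * II (take k ps) y * II (rev (drop k ps)) y)"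
        by (auto simp: Pf_def)
      show ?thesis unfolding e
        by (intro has_vector_derivative_sum term_deriv)
           (use sm in \<open>auto dest: in_set_takeD in_set_dropD\<close>)
    qed
    have SX: "(\<Sum>k\<le>length ps. (-1)^k * (dII (take k ps) y * II (rev (drop k ps)) y)) = - p y * Pf qs y" for y
    proof -
      have "(\<Sum>k\<le>length ps. (-1)^k * (dII (take k ps) y * II (rev (drop k ps)) y))
          = (\<Sum>k\<le>length qs. (-1)^(Suc k) * (dII (take (Suc k) ps) y * II (rev (drop (Suc k) ps)) y))"
        using ps by (simp only: length_Cons sum.atMost_Suc_shift) simp
      also have "\<dots> = (\<Sum>k\<le>length qs. - p y * ((-1)^k * II (take k qs) y * II (rev (drop k qs)) y))"
        using ps by (intro sum.cong) auto
      also have "\<dots> = - p y * Pf qs y" by (simp add: Pf_def sum_distrib_left)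
      finally show ?thesis .
    qed
    have SY: "(\<Sum>k\<le>length ps. (-1)^k * (II (take k ps) y * dII (rev (drop k ps)) y)) = last ps y * Pf bl y" for y
    proof -
      have "(\<Sum>k\<le>length ps. (-1)^k * (II (take k ps) y * dII (rev (drop k ps)) y))
          = (\<Sum>k\<le>length bl. (-1)^k * (II (take k ps) y * dII (rev (drop k ps)) y))"
        unfolding lb sum.atMost_Suc using lb[symmetric] by simp
      also have "\<dots> = (\<Sum>k\<le>length bl. last ps y * ((-1)^k * II (take k bl) y * II (rev (drop k bl)) y))"
      proof (intro sum.cong refl)
        fix k assume "k \<in> {..length bl}"
        then have k: "k < length ps" using lb by auto
        then have ne: "drop k ps \<noteq> []" by simp
        have r: "rev (drop k ps) = last ps # rev (drop k bl)"
          using append_butlast_last_id[OF ne] k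
          by (metis bl_def butlast_drop last_drop rev.simps(2) rev_rev_ident)
        show "(-1)^k * (II (take k ps) y * dII (rev (drop k ps)) y) =
              last ps y * ((-1)^k * II (take k bl) y * II (rev (drop k bl)) y)"
          using k by (simp add: r bl_def take_butlast)
      qed
      also have "\<dots> = last ps y * Pf bl y" by (simp add: Pf_def sum_distrib_left)
      finally show ?thesis .
    qed
    have D0: "(Pf ps has_vector_derivative 0) (at y within UNIV)" for y
    proof -
      have "(\<Sum>k\<le>length ps. (-1)^k * (dII (take k ps) y * II (rev (drop k ps)) y
          + II (take k ps) y * dII (rev (drop k ps)) y)) = 0"
        using SX[of y] SY[of y] Pq Pb by (simp add: distrib_left sum.distrib)
      then show ?thesis using D[of y] by simp
    qed
    obtain c where c: "\<And>y. y \<in> UNIV \<Longrightarrow> Pf ps y = c"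
      using has_vector_derivative_zero_constant[of UNIV "Pf ps"] D0 by blast
    have "Pf ps 0 = 0"
      unfolding Pf_def
    proof (intro sum.neutral ballI)
      fix k assume "k \<in> {..length ps}"
      show "(-1)^k * II (take k ps) 0 * II (rev (drop k ps)) 0 = 0"
      proof (cases k)
        case 0 then show ?thesis using ps by (simp add: II_0)
      next
        case (Suc k') then show ?thesis using ps by (simp add: oint_0)
      qed
    qed
    then show ?thesis using c[of x] c[of 0] by simp
  qed
qed

lemma smooth_dII: "(\<forall>g\<in>set xs. smooth g) \<Longrightarrow> smooth (dII xs)"
proof (cases xs)
  case Nil
  have "dII [] = (\<lambda>_. 0)" by auto
  then show ?thesis using Nil smooth_zero by simp
next
  case (Cons g gs)
  assume "\<forall>g\<in>set xs. smooth g"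
  then have "smooth (\<lambda>t. g t * II gs t)" using Cons by (auto intro!: smooth_mult smooth_II)
  moreover have "dII (g # gs) = (\<lambda>t. g t * II gs t)" by auto
  ultimately show ?thesis using Cons by simp
qed

definition Tf :: "(real \<Rightarrow> complex) \<Rightarrow> nat \<Rightarrow> (real \<Rightarrow> complex) list \<Rightarrow> real \<Rightarrow> complex" where
  "Tf a l ps x = (\<Sum>k\<le>length ps. (-1)^k * nderiv l (\<lambda>t. a t * II (take k ps) t) x * II (rev (drop k ps)) x)"

lemma Tf_Suc:
  assumes a: "smooth a" and sm: "\<forall>g\<in>set (p # qs). smooth g"
  shows "Tf a (Suc l) (p # qs) x = Tf (nderiv (Suc 0) a) l (p # qs) x - Tf (\<lambda>t. a t * p t) l qs x"
proof -
  define ps where "ps = p # qs"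
  define a' where "a' = nderiv (Suc 0) a"
  have smk: "\<forall>g\<in>set (take k ps). smooth g" for k using sm unfolding ps_def by (metis in_set_takeD)
  have sa': "smooth a'" using smooth_D1[OF a] by (simp add: a'_def)
  have N: "nderiv (Suc l) (\<lambda>t. a t * II (take k ps) t) =
      (\<lambda>y. nderiv l (\<lambda>t. a' t * II (take k ps) t) y + nderiv l (\<lambda>t. a t * dII (take k ps) t) y)" for k
  proof -
    have d: "((\<lambda>t. a t * II (take k ps) t) has_vector_derivative
              a' y * II (take k ps) y + a y * dII (take k ps) y) (at y)" for y
      using has_vector_derivative_mult[OF smooth_D[OF a] II_hasD[OF smk[of k]]]
      by (simp add: a'_def algebra_simps)
    show ?thesis
      unfolding nderiv_Suc_eq[OF d]
      by (rule nderiv_add) (auto intro!: smooth_mult sa' a smooth_II smooth_dII smk)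
  qed
  have "Tf a (Suc l) ps x = Tf a' l ps x +
      (\<Sum>k\<le>length ps. (-1)^k * nderiv l (\<lambda>t. a t * dII (take k ps) t) x * II (rev (drop k ps)) x)"
    unfolding Tf_def N by (simp add: algebra_simps sum.distrib)
  also have "(\<Sum>k\<le>length ps. (-1)^k * nderiv l (\<lambda>t. a t * dII (take k ps) t) x * II (rev (drop k ps)) x)
     = (\<Sum>k\<le>length qs. (-1)^(Suc k) * nderiv l (\<lambda>t. a t * dII (take (Suc k) ps) t) x * II (rev (drop (Suc k) ps)) x)"
    by (simp only: ps_def length_Cons sum.atMost_Suc_shift) (simp add: nderiv_zero)
  also have "\<dots> = - Tf (\<lambda>t. a t * p t) l qs x"
    unfolding Tf_def sum_negf[symmetric]
    by (intro sum.cong refl) (simp add: ps_def mult.assoc)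
  finally show ?thesis by (simp add: ps_def a'_def)
qed

lemma Tf_main:
  "smooth a \<Longrightarrow> (\<forall>g\<in>set ps. smooth g) \<Longrightarrow> l \<le> length ps \<Longrightarrow>
   Tf a l ps x = (if l < length ps then 0 else (-1)^l * a x * prod_list (map (\<lambda>g. g x) ps))"
proof (induction l arbitrary: a ps x)
  case 0
  have "Tf a 0 ps x = a x * Pf ps x"
    by (simp add: Tf_def Pf_def sum_distrib_left algebra_simps)
  then show ?case using 0 Pf_zero[of ps x] by (cases ps) (auto simp: Pf_def)
next
  case (Suc l)
  then obtain p qs where ps: "ps = p # qs" by (cases ps) auto
  have sm: "\<forall>g\<in>set (p # qs). smooth g" using Suc ps by auto
  have t1: "Tf (nderiv (Suc 0) a) l (p # qs) x = 0"
    using Suc.IH[of "nderiv (Suc 0) a" "p # qs" x] Suc.prems sm smooth_D1 ps by auto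
  have t2: "Tf (\<lambda>t. a t * p t) l qs x =
      (if l < length qs then 0 else (-1)^l * (a x * p x) * prod_list (map (\<lambda>g. g x) qs))"
  proof -
    have "smooth (\<lambda>t. a t * p t)" using Suc.prems(1) sm by (auto intro!: smooth_mult)
    then show ?thesis using Suc.IH[of "\<lambda>t. a t * p t" qs x] Suc.prems sm ps by auto
  qed
  show ?case
    unfolding ps Tf_Suc[OF Suc.prems(1) sm] t1 t2 using Suc.prems(3) ps by auto
qed

lemma iint_II: "iint \<phi> as x = II (map \<phi> as) x"
proof (induction as arbitrary: x)
  case Nil then show ?case by simp
next
  case (Cons a as)
  have "(\<lambda>t. \<phi> a t * iint \<phi> as t) = (\<lambda>t. \<phi> a t * II (map \<phi> as) t)" using Cons by auto
  then show ?case by simp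
qed

lemma Jform_eq: "Jform n u v = (\<Sum>k\<le>n. (-1)^k * u k * v (n - k))"
  unfolding Jform_def
proof (intro sum.cong refl)
  fix k assume k: "k \<in> {..n}"
  have "(\<Sum>m\<le>n. u k * Jmat n k m * v m) = (\<Sum>m\<le>n. if m = n - k then u k * (-1)^k * v m else 0)"
    using k by (intro sum.cong refl) (auto simp: Jmat_def)
  also have "\<dots> = (-1)^k * u k * v (n - k)" by simp
  finally show "(\<Sum>m\<le>n. u k * Jmat n k m * v m) = (-1)^k * u k * v (n - k)" .
qed

lemma rev_map_aux: "k \<le> n \<Longrightarrow> map (\<lambda>a. n + 1 - a) [1..<n - k + 1] = rev [k + 1..<n + 1]"
  by (rule nth_equalityI) (auto simp: rev_nth nth_upt simp del: upt_Suc)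

theorem proposition5p6:
  fixes n :: nat and \<phi> :: "nat \<Rightarrow> real \<Rightarrow> complex" and f0 :: "real \<Rightarrow> complex"
  assumes "n \<ge> 2"
    and nonvan: "\<And>a x. a \<in> {1..n} \<Longrightarrow> \<phi> a x \<noteq> 0"
    and smooth_phi: "\<And>a k x. a \<in> {1..n} \<Longrightarrow>
          (nderiv k (\<phi> a) has_vector_derivative nderiv (Suc k) (\<phi> a) x) (at x)"
    and f0_sq: "\<And>x. (f0 x)\<^sup>2 * (\<Prod>a=1..n. \<phi> a x) = 1"
    and smooth_f0: "\<And>k x. (nderiv k f0 has_vector_derivative nderiv (Suc k) f0 x) (at x)"
  shows "\<forall>i j x.
     (i + j < n \<longrightarrow>
        Jform n (\<lambda>k. nderiv i (Fvec \<phi> f0 k) x)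
                (\<lambda>k. nderiv j (Fvec (subst_s n \<phi>) f0 k) x) = 0) \<and>
     (i + j = n \<longrightarrow>
        Jform n (\<lambda>k. nderiv i (Fvec \<phi> f0 k) x)
                (\<lambda>k. nderiv j (Fvec (subst_s n \<phi>) f0 k) x) = (-1) ^ i)"
proof -
  define ps where "ps = map \<phi> [1..<n+1]"
  have lps: "length ps = n" by (simp add: ps_def)
  have sps: "\<forall>g\<in>set ps. smooth g" using smooth_phi by (auto simp: ps_def smooth_def)
  have sf0: "smooth f0" using smooth_f0 by (simp add: smooth_def)
  have Fe: "Fvec \<phi> f0 k = (\<lambda>t. f0 t * II (take k ps) t)" if "k \<le> n" for k
    using that by (auto simp: Fvec_def iint_II ps_def take_map simp del: upt_Suc)
  have Ge: "Fvec (subst_s n \<phi>) f0 (n - k) = (\<lambda>t. f0 t * II (rev (drop k ps)) t)" if "k \<le> n" for k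
  proof -
    have "map (subst_s n \<phi>) [1..<n - k + 1] = map \<phi> (map (\<lambda>a. n + 1 - a) [1..<n - k + 1])"
      by (simp add: subst_s_def)
    also have "\<dots> = map \<phi> (rev [k + 1..<n + 1])"
      by (simp only: rev_map_aux[OF that])
    also have "\<dots> = rev (drop k ps)"
      by (simp add: ps_def drop_map rev_map del: upt_Suc)
    finally show ?thesis by (auto simp: Fvec_def iint_II)
  qed
  have sF: "smooth (Fvec \<phi> f0 k)" if "k \<le> n" for k
    unfolding Fe[OF that] using sps sf0 by (auto intro!: smooth_mult smooth_II dest: in_set_takeD)
  have sG: "smooth (Fvec (subst_s n \<phi>) f0 (n - k))" if "k \<le> n" for k
    unfolding Ge[OF that] using sps sf0 by (auto intro!: smooth_mult smooth_II dest!: in_set_dropD)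
  define c where "c = (\<lambda>i j x. \<Sum>k\<le>n. (-1)^k * nderiv i (Fvec \<phi> f0 k) x
                                    * nderiv j (Fvec (subst_s n \<phi>) f0 (n - k)) x)"
  have cJ: "Jform n (\<lambda>k. nderiv i (Fvec \<phi> f0 k) x)
                (\<lambda>k. nderiv j (Fvec (subst_s n \<phi>) f0 k) x) = c i j x" for i j x
    by (simp add: Jform_eq c_def)
  have cD: "((c i j) has_vector_derivative c (Suc i) j x + c i (Suc j) x) (at x)" for i j x
  proof -
    have e: "c i j = (\<lambda>x. \<Sum>k\<le>n. (-1)^k * nderiv i (Fvec \<phi> f0 k) x
                                    * nderiv j (Fvec (subst_s n \<phi>) f0 (n - k)) x)"
      by (simp add: c_def)
    have "((c i j) has_vector_derivative (\<Sum>k\<le>n. ((-1)^k * nderiv i (Fvec \<phi> f0 k) x) *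
          nderiv (Suc j) (Fvec (subst_s n \<phi>) f0 (n - k)) x + ((-1)^k * nderiv (Suc i) (Fvec \<phi> f0 k) x + 0 * nderiv i (Fvec \<phi> f0 k) x)
         * nderiv j (Fvec (subst_s n \<phi>) f0 (n - k)) x)) (at x)"
      unfolding e
      by (intro has_vector_derivative_sum has_vector_derivative_mult has_vector_derivative_const)
         (use sF sG in \<open>auto simp: smooth_def\<close>)
    then show ?thesis by (simp add: c_def sum.distrib[symmetric] algebra_simps)
  qed
  have base: "c i 0 x = (if i < n then 0 else (-1)^i)" if "i \<le> n" for i x
  proof -
    have "c i 0 x = f0 x * Tf f0 i ps x"
      unfolding c_def Tf_def lps sum_distrib_left
      by (intro sum.cong refl) (simp add: Fe Ge)
    also have "\<dots> = (if i < n then 0 else (-1)^i)"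
    proof -
      have pr: "prod_list (map (\<lambda>g. g x) ps) = (\<Prod>a=1..n. \<phi> a x)"
      proof -
        have "prod_list (map (\<lambda>g. g x) ps) = prod_list (map (\<lambda>a. \<phi> a x) [1..<n+1])"
          by (simp add: ps_def o_def del: upt_Suc)
        also have "\<dots> = (\<Prod>a\<in>set [1..<n+1]. \<phi> a x)"
          by (rule prod.distinct_set_conv_list[symmetric]) simp
        also have "set [1..<n+1] = {1..n}" by auto
        finally show ?thesis .
      qed
      show ?thesis using Tf_main[OF sf0 sps, of i x] that f0_sq[of x]
        by (auto simp: lps pr power2_eq_square algebra_simps)
    qed
    finally show ?thesis .
  qed
  have main: "\<forall>i. i + j \<le> n \<longrightarrow> (\<forall>x. c i j x = (if i + j < n then 0 else (-1)^i))" for j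
  proof (induction j)
    case 0 then show ?case using base by simp
  next
    case (Suc j)
    show ?case
    proof (intro allI impI)
      fix i x assume ij: "i + Suc j \<le> n"
      have z: "c i j = (\<lambda>_. 0)" using Suc.IH ij by auto
      have h: "c (Suc i) j x = (if Suc i + j < n then 0 else (-1)^(Suc i))"
        using Suc.IH ij by auto
      have "c (Suc i) j x + c i (Suc j) x = 0"
        using vector_derivative_unique_at[OF cD[of i j x]] z by simp
      then show "c i (Suc j) x = (if i + Suc j < n then 0 else (-1)^i)"
        using h by (auto simp: eq_neg_iff_add_eq_0[symmetric])
    qed
  qed
  show ?thesis
    unfolding cJ using main by auto
qed

end
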